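(* Let $i\ge1$ and $n=4i$. Every ceiling coalition of the $i$-bit roof game $G_{i\text{-bit}}$ on players $\{1,\dots,n\}$ has at most two distinct direct left-shifts.
   Context: Players are $N=\{1,\dots,n\}$, $n=4i$. A coalition $S'$ is a direct left-shift of $S$ if there is $m\in S$, $2\le m\le n$, $m-1\notin S$, with $S'=(S\setminus\{m\})\cup\{m-1\}$; a left-shift of $S$ is obtained by one or more successive direct left-shifts. For $k\in\{0,\dots,2^i-1\}$ with $i$-bit binary representation $b_1\cdots b_i$, $S_{k,i}=\bigcup_{j=1}^iB_j$ where $B_j=\{4(j-1)+2,4(j-1)+3\}$ if $b_j=0$ and $B_j=\{4(j-1)+1,4(j-1)+4\}$ if $b_j=1$. The $i$-bit roof game $G_{i\text{-bit}}$ is the simple game on $N$ in which a coalition is winning iff it contains some $S_{k,i}$ or a left-shift of some $S_{k,i}$ (a canonical linear game whose roof coalitions are exactly the $S_{k,i}$). A maximal losing coalition is a losing $S$ with $S\cup\{m\}$ winning for all $m\notin S$; a ceiling coalition is a maximal losing coalition all of whose left-shifts are winning. *)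

theory Defs
  imports Main
begin

definition direct_left_shift :: "nat \<Rightarrow> nat set \<Rightarrow> nat set \<Rightarrow> bool" where
  "direct_left_shift n S S' \<longleftrightarrow>
     (\<exists>m\<in>S. 2 \<le> m \<and> m \<le> n \<and> m - 1 \<notin> S \<and> S' = insert (m - 1) (S - {m}))"

definition left_shift :: "nat \<Rightarrow> nat set \<Rightarrow> nat set \<Rightarrow> bool" where
  "left_shift n = tranclp (direct_left_shift n)"

text \<open>j-th bit (j = 1..i, b_1 most significant) of the i-bit representation of k.\<close>
definition bit_of :: "nat \<Rightarrow> nat \<Rightarrow> nat \<Rightarrow> nat" where
  "bit_of i k j = (k div 2 ^ (i - j)) mod 2"

definition block :: "nat \<Rightarrow> nat \<Rightarrow> nat \<Rightarrow> nat set" where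
  "block i k j = (if bit_of i k j = 0 then {4*(j-1)+2, 4*(j-1)+3}
                  else {4*(j-1)+1, 4*(j-1)+4})"

definition roof_coal :: "nat \<Rightarrow> nat \<Rightarrow> nat set" where
  "roof_coal i k = (\<Union>j\<in>{1..i}. block i k j)"

definition winning :: "nat \<Rightarrow> nat set \<Rightarrow> bool" where
  "winning i S \<longleftrightarrow> S \<subseteq> {1..4*i} \<and>
     (\<exists>k < 2 ^ i. roof_coal i k \<subseteq> S \<or>
        (\<exists>T. left_shift (4*i) (roof_coal i k) T \<and> T \<subseteq> S))"

definition max_losing :: "nat \<Rightarrow> nat set \<Rightarrow> bool" where
  "max_losing i S \<longleftrightarrow> S \<subseteq> {1..4*i} \<and> \<not> winning i S \<and>
     (\<forall>m\<in>{1..4*i} - S. winning i (insert m S))"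

definition ceiling :: "nat \<Rightarrow> nat set \<Rightarrow> bool" where
  "ceiling i S \<longleftrightarrow> max_losing i S \<and>
     (\<forall>T. left_shift (4*i) S T \<longrightarrow> winning i T)"

end

theory Submission imports Defs begin

lemma bit_of_bit: "bit_of i k j = (if bit k (i - j) then 1 else 0)"
  unfolding bit_of_def by (simp add: bit_iff_odd odd_iff_mod_2_eq_one)

lemma mix_bits:
  fixes k1 k3 i j0 :: nat
  assumes "k1 < 2^i" "k3 < 2^i" "1 \<le> j0" "j0 \<le> i"
  shows "\<exists>k<2^i. bit_of i k j0 = bit_of i k3 j0 \<and>
            (\<forall>j\<in>{1..i}. j \<noteq> j0 \<longrightarrow> bit_of i k j = bit_of i k1 j)"
proof -
  define k where "k = (if bit k3 (i-j0) then set_bit (i-j0) k1 else unset_bit (i-j0) k1)"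
  have lt: "i - j0 < i" using assms by linarith
  have "k < 2^i"
  proof -
    have "take_bit i k = k"
      using assms(1) lt unfolding k_def
      by (auto simp: take_bit_set_bit_eq take_bit_unset_bit_eq take_bit_nat_eq_self_iff[symmetric])
    thus ?thesis by (simp add: take_bit_nat_eq_self_iff)
  qed
  moreover have "bit_of i k j0 = bit_of i k3 j0"
    unfolding bit_of_bit k_def by (auto simp: bit_set_bit_iff bit_unset_bit_iff)
  moreover have "\<forall>j\<in>{1..i}. j \<noteq> j0 \<longrightarrow> bit_of i k j = bit_of i k1 j"
  proof (intro ballI impI)
    fix j assume "j \<in> {1..i}" "j \<noteq> j0"
    hence "i - j0 \<noteq> i - j" using assms by auto
    thus "bit_of i k j = bit_of i k1 j"
      unfolding bit_of_bit k_def by (auto simp: bit_set_bit_iff bit_unset_bit_iff)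
  qed
  ultimately show ?thesis by blast
qed


definition cnt :: "nat set \<Rightarrow> nat \<Rightarrow> nat" where
  "cnt A x = card (A \<inter> {..x})"

definition dom :: "nat set \<Rightarrow> nat set \<Rightarrow> bool" where
  "dom A B \<longleftrightarrow> (\<forall>x. cnt A x \<le> cnt B x)"

lemma shift_cnt:
  assumes "finite A" "m \<in> A" "m - 1 \<notin> A" "1 \<le> m"
  shows "cnt (insert (m-1) (A-{m})) x = (if x = m-1 then cnt A x + 1 else cnt A x)"
proof -
  consider "x < m - 1" | "x = m - 1" | "x \<ge> m" by linarith
  thus ?thesis
  proof cases
    case 1
    hence "insert (m-1) (A-{m}) \<inter> {..x} = A \<inter> {..x}" by auto
    thus ?thesis using 1 by (simp add: cnt_def)
  next
    case 2
    hence "insert (m-1) (A-{m}) \<inter> {..x} = insert (m-1) (A \<inter> {..x})" using assms by auto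
    thus ?thesis using 2 assms by (simp add: cnt_def)
  next
    case 3
    hence "insert (m-1) (A-{m}) \<inter> {..x} = insert (m-1) (A \<inter> {..x} - {m})" using assms by auto
    moreover have "m \<in> A \<inter> {..x}" using 3 assms by auto
    moreover have "card (A \<inter> {..x}) > 0" using \<open>m \<in> A \<inter> {..x}\<close> assms(1)
      by (simp add: card_gt_0_iff) blast
    ultimately show ?thesis using 3 assms
      by (simp add: cnt_def card.insert_remove card_Suc_Diff1)
  qed
qed

lemma dsl_dom:
  assumes "direct_left_shift n A A'" "finite A"
  shows "dom A A' \<and> finite A'"
proof -
  obtain m where m: "m \<in> A" "2 \<le> m" "m \<le> n" "m - 1 \<notin> A" "A' = insert (m - 1) (A - {m})"
    using assms(1) unfolding direct_left_shift_def by blast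
  show ?thesis using m assms(2) shift_cnt[of A m] by (auto simp: dom_def)
qed

lemma dom_trans: "dom A B \<Longrightarrow> dom B C \<Longrightarrow> dom A C"
  unfolding dom_def using le_trans by blast

lemma ls_dom:
  assumes "left_shift n A B" "finite A"
  shows "dom A B \<and> finite B"
  using assms unfolding left_shift_def
proof (induction rule: tranclp_induct)
  case (base y) thus ?case using dsl_dom by blast
next
  case (step y z) thus ?case using dsl_dom dom_trans by blast
qed

lemma dom_subset: "dom A B \<Longrightarrow> B \<subseteq> C \<Longrightarrow> finite C \<Longrightarrow> dom A C"
  unfolding dom_def cnt_def
  by (meson card_mono finite_Int inf_mono order_refl le_trans)

lemma dom_refl: "dom A A" by (simp add: dom_def)

lemma dom_exists:
  fixes n :: nat
  assumes "finite A" "A \<subseteq> {1..n}" "S \<subseteq> {1..n}" "dom A S"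
  shows "\<exists>T\<subseteq>S. T = A \<or> left_shift n A T"
  using assms
proof (induction "\<Sum>A" arbitrary: A rule: less_induct)
  case less
  show ?case
  proof (cases "A \<subseteq> S")
    case True thus ?thesis by blast
  next
    case False
    then obtain a where a: "a \<in> A" "a \<notin> S" by blast
    have finS: "finite S" using less.prems(3) finite_subset by blast
    have a1: "a \<ge> 1" using a less.prems(2) by auto
    define P where "P x \<longleftrightarrow> cnt A x < cnt S x" for x
    have "P (a - 1)"
    proof -
      have e1: "A \<inter> {..a} = insert a (A \<inter> {..a-1})" using a a1 by auto
      have e2: "S \<inter> {..a} = S \<inter> {..a-1}"
      proof (intro equalityI subsetI)
        fix x assume "x \<in> S \<inter> {..a}"
        moreover hence "x \<noteq> a" using a by auto
        ultimately show "x \<in> S \<inter> {..a-1}" by auto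
      qed auto
      have "cnt A a \<le> cnt S a" using less.prems(4) by (simp add: dom_def)
      moreover have "a \<notin> A \<inter> {..a-1}" using a1 by auto
      ultimately show ?thesis using e1 e2 less.prems(1) unfolding P_def cnt_def by simp
    qed
    define x0 where "x0 = (LEAST x. P x)"
    have Px0: "P x0" unfolding x0_def by (rule LeastI, fact)
    have x0a: "x0 \<le> a - 1" unfolding x0_def by (rule Least_le, fact)
    have "\<not> P 0"
    proof -
      have "S \<inter> {..0} = {}" using less.prems(3) by auto
      thus ?thesis unfolding P_def cnt_def by simp
    qed
    hence x0pos: "x0 \<ge> 1" using Px0 by (cases x0) auto
    have nP: "\<not> P (x0 - 1)"
    proof -
      have "x0 - 1 < x0" using x0pos by simp
      thus ?thesis using not_less_Least[of "x0-1" P] unfolding x0_def by simp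
    qed
    have x0A: "x0 \<notin> A"
    proof
      assume "x0 \<in> A"
      have e1: "A \<inter> {..x0} = insert x0 (A \<inter> {..x0-1})" using \<open>x0 \<in> A\<close> x0pos by auto
      have e2: "S \<inter> {..x0} \<subseteq> insert x0 (S \<inter> {..x0-1})" using x0pos by auto
      have "card (S \<inter> {..x0}) \<le> card (insert x0 (S \<inter> {..x0-1}))"
        using e2 finS by (intro card_mono) auto
      also have "\<dots> \<le> Suc (card (S \<inter> {..x0-1}))" by (simp add: card_insert_le_m1 card_insert_if)
      moreover have "x0 \<notin> A \<inter> {..x0-1}" using x0pos by auto
      ultimately show False using e1 nP Px0 less.prems(1) unfolding P_def cnt_def by simp
    qed
    define m where "m = (LEAST y. y \<in> A \<and> y > x0)"
    have ex: "a \<in> A \<and> a > x0" using a x0a a1 by auto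
    have mA: "m \<in> A" and mx0: "m > x0" using LeastI[of "\<lambda>y. y \<in> A \<and> y > x0", OF ex] by (auto simp: m_def)
    have mmin: "\<And>y. y \<in> A \<Longrightarrow> y > x0 \<Longrightarrow> m \<le> y" unfolding m_def by (rule Least_le) blast
    have m1A: "m - 1 \<notin> A"
    proof
      assume h: "m - 1 \<in> A"
      show False
      proof (cases "m - 1 = x0")
        case True thus False using h x0A by simp
      next
        case False
        hence "m - 1 > x0" using mx0 by linarith
        thus False using mmin[OF h] mx0 by linarith
      qed
    qed
    have m2: "m \<ge> 2" using mx0 x0pos by linarith
    have mn: "m \<le> n" using mA less.prems(2) by auto
    define A' where "A' = insert (m - 1) (A - {m})"
    have dsl: "direct_left_shift n A A'" unfolding direct_left_shift_def A'_def
      using mA m2 mn m1A by blast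
    have eqA: "A \<inter> {..m-1} = A \<inter> {..x0}"
    proof -
      have "y \<le> x0" if "y \<in> A" "y \<le> m - 1" for y
      proof (rule ccontr)
        assume "\<not> y \<le> x0"
        hence "m \<le> y" using mmin that(1) by simp
        thus False using that(2) m2 by linarith
      qed
      thus ?thesis using mx0 by auto
    qed
    have "cnt S x0 \<le> cnt S (m - 1)" unfolding cnt_def
      using finS mx0 by (intro card_mono) auto
    hence Pm: "cnt A (m-1) < cnt S (m-1)" using Px0 eqA unfolding P_def cnt_def by simp
    have domA': "dom A' S"
      unfolding dom_def
    proof
      fix x
      show "cnt A' x \<le> cnt S x"
        using shift_cnt[of A m x] less.prems(1) mA m1A m2 Pm less.prems(4)
        unfolding A'_def dom_def by auto
    qed
    have sumlt: "\<Sum>A' < \<Sum>A"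
    proof -
      have "\<Sum>A' = (m - 1) + \<Sum>(A - {m})" unfolding A'_def using m1A less.prems(1) by simp
      moreover have "\<Sum>A = m + \<Sum>(A - {m})" using mA less.prems(1) by (simp add: sum.remove)
      ultimately show ?thesis using m2 by simp
    qed
    have A'sub: "A' \<subseteq> {1..n}" unfolding A'_def using less.prems(2) m2 mn by auto
    obtain T where T: "T \<subseteq> S" "T = A' \<or> left_shift n A' T"
      using less.hyps[OF sumlt _ A'sub less.prems(3) domA'] less.prems(1) unfolding A'_def by auto
    have "left_shift n A T"
      using T(2) dsl unfolding left_shift_def by (auto intro: tranclp_into_tranclp2)
    thus ?thesis using T(1) by blast
  qed
qed


lemma block_range: "1 \<le> j \<Longrightarrow> block i k j \<subseteq> {4*j-3..4*j}"
  unfolding block_def by auto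

lemma roof_sub: "roof_coal i k \<subseteq> {1..4*i}"
  unfolding roof_coal_def block_def by auto

lemma finite_block: "finite (block i k j)"
  unfolding block_def by auto

lemma win_iff:
  "winning i S \<longleftrightarrow> S \<subseteq> {1..4*i} \<and> (\<exists>k<2^i. dom (roof_coal i k) S)"
proof
  assume w: "winning i S"
  hence sub: "S \<subseteq> {1..4*i}" by (simp add: winning_def)
  hence finS: "finite S" using finite_subset by blast
  obtain k where k: "k < 2^i" "roof_coal i k \<subseteq> S \<or> (\<exists>T. left_shift (4*i) (roof_coal i k) T \<and> T \<subseteq> S)"
    using w unfolding winning_def by blast
  have finR: "finite (roof_coal i k)" using roof_sub finite_subset by blast
  have "dom (roof_coal i k) S"
    using k(2)
  proof
    assume "roof_coal i k \<subseteq> S" thus ?thesis using dom_subset[OF dom_refl _ finS] by blast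
  next
    assume "\<exists>T. left_shift (4*i) (roof_coal i k) T \<and> T \<subseteq> S"
    then obtain T where "left_shift (4*i) (roof_coal i k) T" "T \<subseteq> S" by blast
    thus ?thesis using ls_dom[OF _ finR] dom_subset finS by blast
  qed
  thus "S \<subseteq> {1..4*i} \<and> (\<exists>k<2^i. dom (roof_coal i k) S)" using sub k(1) by blast
next
  assume h: "S \<subseteq> {1..4*i} \<and> (\<exists>k<2^i. dom (roof_coal i k) S)"
  then obtain k where k: "k < 2^i" "dom (roof_coal i k) S" by blast
  have finR: "finite (roof_coal i k)" using roof_sub finite_subset by blast
  obtain T where "T \<subseteq> S" "T = roof_coal i k \<or> left_shift (4*i) (roof_coal i k) T"
    using dom_exists[OF finR roof_sub _ k(2)] h by blast
  thus "winning i S" unfolding winning_def using h k(1) by blast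
qed

lemma roof_cnt: "cnt (roof_coal i k) x = (\<Sum>j\<in>{1..i}. card (block i k j \<inter> {..x}))"
proof -
  have "roof_coal i k \<inter> {..x} = (\<Union>j\<in>{1..i}. block i k j \<inter> {..x})"
    unfolding roof_coal_def by auto
  moreover have "card (\<Union>j\<in>{1..i}. block i k j \<inter> {..x}) = (\<Sum>j\<in>{1..i}. card (block i k j \<inter> {..x}))"
  proof (rule card_UN_disjoint)
    show "\<forall>j\<in>{1..i}. \<forall>j'\<in>{1..i}. j \<noteq> j' \<longrightarrow> (block i k j \<inter> {..x}) \<inter> (block i k j' \<inter> {..x}) = {}"
    proof (intro ballI impI)
      fix j j' assume "j \<in> {1..i}" "j' \<in> {1..i}" "j \<noteq> j'"
      thus "(block i k j \<inter> {..x}) \<inter> (block i k j' \<inter> {..x}) = {}"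
        using block_range[of j i k] block_range[of j' i k] by fastforce
    qed
  qed (auto simp: finite_block)
  ultimately show ?thesis by (simp add: cnt_def)
qed

lemma block_card:
  assumes "1 \<le> j" "x \<notin> {4*j-3..4*j}"
  shows "card (block i k j \<inter> {..x}) = card (block i k' j \<inter> {..x})"
proof (cases "x < 4*j-3")
  case True
  hence "block i k j \<inter> {..x} = {}" "block i k' j \<inter> {..x} = {}"
    using block_range[of j i k] block_range[of j i k'] assms(1) by fastforce+
  thus ?thesis by simp
next
  case False
  hence "x > 4*j" using assms by auto
  hence "block i k j \<inter> {..x} = block i k j" "block i k' j \<inter> {..x} = block i k' j"
    using block_range[of j i k] block_range[of j i k'] assms(1) by fastforce+
  moreover have "card (block i k j) = 2" "card (block i k' j) = 2"
    unfolding block_def by auto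
  ultimately show ?thesis by simp
qed

lemma block_eq: "bit_of i k j = bit_of i k' j \<Longrightarrow> block i k j = block i k' j"
  unfolding block_def by simp

lemma three_elems:
  fixes M :: "nat set"
  assumes "finite M" "card M \<ge> 3"
  shows "\<exists>a b c. a \<in> M \<and> b \<in> M \<and> c \<in> M \<and> a < b \<and> b < c"
proof -
  have ne: "M \<noteq> {}" using assms by auto
  define a where "a = Min M"
  have aM: "a \<in> M" using ne assms(1) unfolding a_def by simp
  define M1 where "M1 = M - {a}"
  have c1: "card M1 \<ge> 2" using assms aM unfolding M1_def by simp
  have ne1: "M1 \<noteq> {}" "finite M1"
    using c1 assms(1) unfolding M1_def by (metis card.empty not_numeral_le_zero, simp)
  define b where "b = Min M1"
  have bM: "b \<in> M1" using ne1 unfolding b_def by simp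
  define M2 where "M2 = M1 - {b}"
  have "card M2 \<ge> 1" using c1 bM ne1 unfolding M2_def by simp
  then obtain c where cM: "c \<in> M2" by (metis card.empty ex_in_conv not_one_le_zero)
  have "a < b" using bM aM assms(1) unfolding M1_def a_def
    by (metis DiffE Min_le insertI1 order_le_neq_trans)
  moreover have "b < c" using cM ne1 unfolding M2_def b_def
    by (metis DiffE Min_le insertI1 order_le_neq_trans)
  ultimately show ?thesis using aM bM cM unfolding M1_def M2_def by blast
qed

lemma core:
  assumes i1: "1 \<le> i" and sub: "S \<subseteq> {1..4*i}" and nw: "\<not> winning i S"
    and m1: "m1 \<in> S" "2 \<le> m1" "m1 - 1 \<notin> S"
    and m3: "m3 \<in> S" "m3 \<le> 4*i" "m3 - 1 \<notin> S" "m3 \<ge> m1 + 4"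
    and w1: "winning i (insert (m1-1) (S-{m1}))"
    and w3: "winning i (insert (m3-1) (S-{m3}))"
  shows False
proof -
  have finS: "finite S" using sub finite_subset by blast
  obtain k1 where k1: "k1 < 2^i" "dom (roof_coal i k1) (insert (m1-1) (S-{m1}))"
    using w1 win_iff by blast
  obtain k3 where k3: "k3 < 2^i" "dom (roof_coal i k3) (insert (m3-1) (S-{m3}))"
    using w3 win_iff by blast
  have loc1: "cnt (roof_coal i k1) x \<le> cnt S x" if "x \<noteq> m1 - 1" for x
  proof -
    have "cnt (insert (m1-1) (S-{m1})) x = cnt S x"
      using shift_cnt[OF finS m1(1) m1(3), of x] m1(2) that by auto
    moreover have "cnt (roof_coal i k1) x \<le> cnt (insert (m1-1) (S-{m1})) x"
      using k1(2) unfolding dom_def by blast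
    ultimately show ?thesis by simp
  qed
  have loc3: "cnt (roof_coal i k3) x \<le> cnt S x" if "x \<noteq> m3 - 1" for x
  proof -
    have "cnt (insert (m3-1) (S-{m3})) x = cnt S x"
      using shift_cnt[OF finS m3(1) m3(3), of x] m1(2) m3(4) that by auto
    moreover have "cnt (roof_coal i k3) x \<le> cnt (insert (m3-1) (S-{m3})) x"
      using k3(2) unfolding dom_def by blast
    ultimately show ?thesis by simp
  qed
  define p where "p = m1 - 1"
  define j0 where "j0 = (p + 3) div 4"
  have dm: "4 * ((p+3) div 4) + (p+3) mod 4 = p + 3" by simp
  have "(p+3) mod 4 < 4" by simp
  hence j0a: "4*j0 - 3 \<le> p" "p \<le> 4*j0" "1 \<le> j0" "j0 \<le> i"
    using dm m1(2) m3 unfolding j0_def p_def by linarith+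
  obtain k where k: "k < 2^i" "bit_of i k j0 = bit_of i k3 j0"
      "\<forall>j\<in>{1..i}. j \<noteq> j0 \<longrightarrow> bit_of i k j = bit_of i k1 j"
    using mix_bits[OF k1(1) k3(1) j0a(3) j0a(4)] by blast
  have "dom (roof_coal i k) S" unfolding dom_def
  proof
    fix x
    show "cnt (roof_coal i k) x \<le> cnt S x"
    proof (cases "x \<in> {4*j0-3..4*j0}")
      case True
      have "cnt (roof_coal i k) x = cnt (roof_coal i k3) x"
        unfolding roof_cnt
      proof (rule sum.cong)
        fix j assume j: "j \<in> {1..i}"
        show "card (block i k j \<inter> {..x}) = card (block i k3 j \<inter> {..x})"
        proof (cases "j = j0")
          case True thus ?thesis using block_eq[OF k(2)] by simp
        next
          case False
          hence "x \<notin> {4*j-3..4*j}" using \<open>x \<in> {4*j0-3..4*j0}\<close> j j0a by auto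
          thus ?thesis using block_card j by auto
        qed
      qed simp
      moreover have "x \<noteq> m3 - 1" using True j0a m3(4) unfolding p_def by auto
      ultimately show ?thesis using loc3 by simp
    next
      case False
      have "cnt (roof_coal i k) x = cnt (roof_coal i k1) x"
        unfolding roof_cnt
      proof (rule sum.cong)
        fix j assume j: "j \<in> {1..i}"
        show "card (block i k j \<inter> {..x}) = card (block i k1 j \<inter> {..x})"
        proof (cases "j = j0")
          case True thus ?thesis using block_card j False by auto
        next
          case False
          thus ?thesis using block_eq k(3) j by metis
        qed
      qed simp
      moreover have "x \<noteq> m1 - 1" using False j0a unfolding p_def by auto
      ultimately show ?thesis using loc1 by simp
    qed
  qed
  hence "winning i S" using win_iff sub k(1) by blast
  thus False using nw by simp
qed

theorem lemma3:
  fixes i :: nat and S :: "nat set"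
  assumes "1 \<le> i" and "ceiling i S"
  shows "card {T. direct_left_shift (4*i) S T} \<le> 2"
proof -
  have ml: "max_losing i S" and cw: "\<forall>T. left_shift (4*i) S T \<longrightarrow> winning i T"
    using assms(2) unfolding ceiling_def by auto
  have sub: "S \<subseteq> {1..4*i}" and nw: "\<not> winning i S" using ml unfolding max_losing_def by auto
  have wd: "winning i T" if "direct_left_shift (4*i) S T" for T
    using cw that unfolding left_shift_def by auto
  define M where "M = {m\<in>S. 2 \<le> m \<and> m \<le> 4*i \<and> m - 1 \<notin> S}"
  have finM: "finite M" unfolding M_def using sub finite_subset by auto
  have eq: "{T. direct_left_shift (4*i) S T} = (\<lambda>m. insert (m-1) (S-{m})) ` M"
    unfolding M_def direct_left_shift_def by auto
  have wM: "winning i (insert (m-1) (S-{m}))" if "m \<in> M" for m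
    using wd that unfolding M_def direct_left_shift_def by blast
  have "card M \<le> 2"
  proof (rule ccontr)
    assume "\<not> card M \<le> 2"
    then obtain a b c where abc: "a \<in> M" "b \<in> M" "c \<in> M" "a < b" "b < c"
      using three_elems[OF finM] by auto
    have "b - 1 \<noteq> a" using abc unfolding M_def by auto
    hence "b \<ge> a + 2" using abc by linarith
    moreover have "c - 1 \<noteq> b" using abc unfolding M_def by auto
    hence "c \<ge> b + 2" using abc by linarith
    ultimately have "c \<ge> a + 4" by linarith
    thus False using core[OF assms(1) sub nw _ _ _ _ _ _ _ wM[OF abc(1)] wM[OF abc(3)]] abc
      unfolding M_def by auto
  qed
  moreover have "card {T. direct_left_shift (4*i) S T} \<le> card M"
    unfolding eq using finM card_image_le by blast
  ultimately show ?thesis by linarith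
qed

end
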